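(* Let $N$ be a non-negative integer and let $h_1,h_2,l_1,l_2,\alpha_1,\alpha_2,\beta,E$ satisfy $\beta=N+1$. Then the singularity $x=0$ of the $q$-Heun equation $A^{\langle4\rangle}(x;h_1,h_2,l_1,l_2,\alpha_1,\alpha_2,\beta)g(x)=Eg(x)$ is apparent (in the sense of the context) if and only if $c(E)=0$, where $c(E)$ is the polynomial defined in the context.
   Context: $q\in\mathbb{C}$ with $0<|q|<1$; powers via a fixed branch of $\log q$; $t_1,t_2$ fixed non-zero constants. $A^{\langle 4\rangle}(x;h_1,h_2,l_1,l_2,\alpha_1,\alpha_2,\beta)=x^{-1}(x-q^{h_1+1/2}t_1)(x-q^{h_2+1/2}t_2)T_x^{-1}+q^{\alpha_1+\alpha_2}x^{-1}(x-q^{l_1-1/2}t_1)(x-q^{l_2-1/2}t_2)T_x-\{(q^{\alpha_1}+q^{\alpha_2})x+q^{(h_1+h_2+l_1+l_2+\alpha_1+\alpha_2)/2}(q^{\beta/2}+q^{-\beta/2})t_1t_2x^{-1}\}$, where $T_x^{\pm1}g(x)=g(q^{\pm1}x)$. Let $\lambda_1=(h_1+h_2-l_1-l_2-\alpha_1-\alpha_2-\beta+2)/2$. Apparency: a formal series $x^{\lambda_1}\sum_{n\ge0}d_nx^n$ solves the equation iff for all $n\ge1$ (with $d_{-1}=0$) $d_nt_1t_2q^{1-n+h_1+h_2-\lambda_1}(1-q^n)(1-q^{n-\beta})-d_{n-1}[E+q^{3/2-n-\lambda_1}(q^{h_1}t_1+q^{h_2}t_2)+q^{n-3/2+\lambda_1+\alpha_1+\alpha_2}(q^{l_1}t_1+q^{l_2}t_2)]+d_{n-2}q^{2-n-\lambda_1}(1-q^{n-2+\lambda_1+\alpha_1})(1-q^{n-2+\lambda_1+\alpha_2})=0$.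 With $\beta=N+1$, set $d_0=1$ and determine $d_1,\dots,d_N$ uniquely from these relations for $n=1,\dots,N$; the singularity $x=0$ is called apparent if the relation for $n=N+1$ (in which the coefficient of $d_{N+1}$ vanishes) then holds. The polynomial $c(E)$: set $x_n=t_1t_2q^{n-N+1+h_1+h_2-\alpha_1-2\lambda_1}(1-q^{-n})(1-q^{N-n+\lambda_1+\alpha_1})$, $y_n=q^{N-n+1/2+\lambda_1+\alpha_1+\alpha_2}(q^{l_1}t_1+q^{l_2}t_2)+q^{n-N-1/2-\lambda_1}(q^{h_1}t_1+q^{h_2}t_2)$, $z_n=q^{n-N-2+\alpha_1}(1-q^{N-n+1+\lambda_1+\alpha_2})(1-q^{N-n+2})$, and $c(E)=\sum(-1)^kx_{i_1}z_{i_1+1}\cdots x_{i_k}z_{i_k+1}\prod_{j\in\{1,\dots,N+1\}\setminus\{i_1,i_1+1,\dots,i_k,i_k+1\}}(E+y_j)$, summed over $k\ge0$ and integers $1\le i_1<\dots<i_k\le N$ with $i_{l+1}-i_l\ge2$. (When all $x_n\ne0$, this equals $x_1\cdots x_N[c_N(E)(E+y_{N+1})-c_{N-1}(E)z_{N+1}]$ where $c_{-1}=0$, $c_0=1$, $c_n(E)x_n=c_{n-1}(E)(E+y_n)-c_{n-2}(E)z_n$.) *)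

theory Defs
  imports Complex_Main
begin

text \<open>Powers of q via a fixed branch L of log q (exp L = q): q^a = exp (a * L).\<close>
definition qp :: "complex \<Rightarrow> complex \<Rightarrow> complex" where
  "qp L a = exp (a * L)"

definition lambda1 :: "complex \<Rightarrow> complex \<Rightarrow> complex \<Rightarrow> complex \<Rightarrow> complex \<Rightarrow> complex \<Rightarrow> complex \<Rightarrow> complex" where
  "lambda1 h1 h2 l1 l2 a1 a2 b = (h1 + h2 - l1 - l2 - a1 - a2 - b + 2) / 2"

definition heun_rel ::
  "complex \<Rightarrow> complex \<Rightarrow> complex \<Rightarrow> complex \<Rightarrow> complex \<Rightarrow> complex \<Rightarrow> complex \<Rightarrow> complex \<Rightarrow> complex
   \<Rightarrow> complex \<Rightarrow> complex \<Rightarrow> (nat \<Rightarrow> complex) \<Rightarrow> nat \<Rightarrow> bool" where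
  "heun_rel L t1 t2 h1 h2 l1 l2 a1 a2 b E d n \<longleftrightarrow>
     (let lam = lambda1 h1 h2 l1 l2 a1 a2 b; m = of_nat n :: complex in
      d n * t1 * t2 * qp L (1 - m + h1 + h2 - lam) * (1 - qp L m) * (1 - qp L (m - b))
      - d (n - 1) * (E + qp L (3/2 - m - lam) * (qp L h1 * t1 + qp L h2 * t2)
                     + qp L (m - 3/2 + lam + a1 + a2) * (qp L l1 * t1 + qp L l2 * t2))
      + (if n \<ge> 2 then d (n - 2) else 0) * qp L (2 - m - lam)
          * (1 - qp L (m - 2 + lam + a1)) * (1 - qp L (m - 2 + lam + a2)) = 0)"

text \<open>Apparency of x = 0 for beta = N+1: with d_0 = 1 and d_1..d_N determined by the
  relations n = 1..N, the relation n = N+1 holds as well.  Since d_1..d_N are uniquely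
  determined (and the coefficient of d_{N+1} in relation N+1 vanishes), this is expressed as
  existence of a sequence d with d 0 = 1 satisfying relations 1..N+1.\<close>
definition apparent ::
  "complex \<Rightarrow> complex \<Rightarrow> complex \<Rightarrow> complex \<Rightarrow> complex \<Rightarrow> complex \<Rightarrow> complex \<Rightarrow> complex \<Rightarrow> complex
   \<Rightarrow> complex \<Rightarrow> complex \<Rightarrow> nat \<Rightarrow> bool" where
  "apparent L t1 t2 h1 h2 l1 l2 a1 a2 b E N \<longleftrightarrow>
     (\<exists>d. d 0 = 1 \<and> (\<forall>n\<in>{1..N+1}. heun_rel L t1 t2 h1 h2 l1 l2 a1 a2 b E d n))"

definition cx :: "complex \<Rightarrow> complex \<Rightarrow> complex \<Rightarrow> complex \<Rightarrow> complex \<Rightarrow> complex \<Rightarrow> complex \<Rightarrow> complex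
   \<Rightarrow> complex \<Rightarrow> complex \<Rightarrow> nat \<Rightarrow> nat \<Rightarrow> complex" where
  "cx L t1 t2 h1 h2 l1 l2 a1 a2 b N n =
     (let lam = lambda1 h1 h2 l1 l2 a1 a2 b; m = of_nat n :: complex; NN = of_nat N :: complex in
      t1 * t2 * qp L (m - NN + 1 + h1 + h2 - a1 - 2 * lam) * (1 - qp L (- m))
        * (1 - qp L (NN - m + lam + a1)))"

definition cy :: "complex \<Rightarrow> complex \<Rightarrow> complex \<Rightarrow> complex \<Rightarrow> complex \<Rightarrow> complex \<Rightarrow> complex \<Rightarrow> complex
   \<Rightarrow> complex \<Rightarrow> complex \<Rightarrow> nat \<Rightarrow> nat \<Rightarrow> complex" where
  "cy L t1 t2 h1 h2 l1 l2 a1 a2 b N n =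
     (let lam = lambda1 h1 h2 l1 l2 a1 a2 b; m = of_nat n :: complex; NN = of_nat N :: complex in
      qp L (NN - m + 1/2 + lam + a1 + a2) * (qp L l1 * t1 + qp L l2 * t2)
      + qp L (m - NN - 1/2 - lam) * (qp L h1 * t1 + qp L h2 * t2))"

definition cz :: "complex \<Rightarrow> complex \<Rightarrow> complex \<Rightarrow> complex \<Rightarrow> complex \<Rightarrow> complex \<Rightarrow> complex
   \<Rightarrow> complex \<Rightarrow> nat \<Rightarrow> nat \<Rightarrow> complex" where
  "cz L h1 h2 l1 l2 a1 a2 b N n =
     (let lam = lambda1 h1 h2 l1 l2 a1 a2 b; m = of_nat n :: complex; NN = of_nat N :: complex in
      qp L (m - NN - 2 + a1) * (1 - qp L (NN - m + 1 + lam + a2)) * (1 - qp L (NN - m + 2)))"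

definition cpoly :: "complex \<Rightarrow> complex \<Rightarrow> complex \<Rightarrow> complex \<Rightarrow> complex \<Rightarrow> complex \<Rightarrow> complex \<Rightarrow> complex
   \<Rightarrow> complex \<Rightarrow> complex \<Rightarrow> nat \<Rightarrow> complex \<Rightarrow> complex" where
  "cpoly L t1 t2 h1 h2 l1 l2 a1 a2 b N E =
     (\<Sum>S\<in>{S. S \<subseteq> {1..N} \<and> (\<forall>i\<in>S. Suc i \<notin> S)}.
        (-1) ^ card S
        * (\<Prod>i\<in>S. cx L t1 t2 h1 h2 l1 l2 a1 a2 b N i * cz L h1 h2 l1 l2 a1 a2 b N (Suc i))
        * (\<Prod>j\<in>{1..N+1} - (S \<union> Suc ` S). E + cy L t1 t2 h1 h2 l1 l2 a1 a2 b N j))"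

end

theory Submission imports Defs begin

lemma induct2: assumes "Q 0" "Q (Suc 0)" "\<And>n. Q n \<Longrightarrow> Q (Suc n) \<Longrightarrow> Q (Suc (Suc n))"
  shows "Q n"
proof -
  have "Q n \<and> Q (Suc n)" by (induction n) (use assms in auto)
  then show ?thesis by simp
qed

definition adm :: "nat \<Rightarrow> nat set set" where
 "adm m = {S. S \<subseteq> {1..m} \<and> (\<forall>i\<in>S. Suc i \<notin> S)}"

definition msum :: "(nat \<Rightarrow> complex) \<Rightarrow> (nat \<Rightarrow> complex) \<Rightarrow> nat \<Rightarrow> complex" where
 "msum f g m = (\<Sum>S\<in>adm m. (-1)^card S * (\<Prod>i\<in>S. g i) * (\<Prod>j\<in>{1..Suc m} - (S \<union> Suc ` S). f j))"

lemma finite_adm: "finite (adm m)"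
  unfolding adm_def by (rule finite_subset[of _ "Pow {1..m}"]) auto

lemma adm_fin: "S \<in> adm m \<Longrightarrow> finite S" unfolding adm_def using finite_subset by auto

lemma adm0: "adm 0 = {{}}" unfolding adm_def by auto
lemma adm1: "adm (Suc 0) = {{}, {1}}" unfolding adm_def by auto

lemma adm_SS: "adm (Suc (Suc m)) = adm (Suc m) \<union> insert (Suc (Suc m)) ` adm m"
proof
  show "adm (Suc (Suc m)) \<subseteq> adm (Suc m) \<union> insert (Suc (Suc m)) ` adm m"
  proof
    fix S assume S: "S \<in> adm (Suc (Suc m))"
    show "S \<in> adm (Suc m) \<union> insert (Suc (Suc m)) ` adm m"
    proof (cases "Suc (Suc m) \<in> S")
      case True
      then have "Suc m \<notin> S" using S unfolding adm_def by auto
      then have "S - {Suc (Suc m)} \<in> adm m" using S unfolding adm_def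
        by (auto simp: subset_iff) (metis atLeastAtMost_iff le_Suc_eq)
      moreover have "S = insert (Suc (Suc m)) (S - {Suc (Suc m)})" using True by auto
      ultimately show ?thesis by blast
    next
      case False
      then have "S \<in> adm (Suc m)" using S unfolding adm_def
        by (auto simp: subset_iff) (metis atLeastAtMost_iff le_Suc_eq)
      then show ?thesis by blast
    qed
  qed
next
  show "adm (Suc m) \<union> insert (Suc (Suc m)) ` adm m \<subseteq> adm (Suc (Suc m))"
    unfolding adm_def by (auto simp: subset_iff)
qed

lemma msum_SS: "msum f g (Suc (Suc m)) = f (Suc (Suc (Suc m))) * msum f g (Suc m) - g (Suc (Suc m)) * msum f g m"
proof -
  let ?w = "\<lambda>n S. (-1)^card S * (\<Prod>i\<in>S. g i) * (\<Prod>j\<in>{1..Suc n} - (S \<union> Suc ` S). f j)"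
  have disj: "adm (Suc m) \<inter> insert (Suc (Suc m)) ` adm m = {}"
    unfolding adm_def by auto
  have inj: "inj_on (insert (Suc (Suc m))) (adm m)"
    unfolding adm_def inj_on_def by auto (metis insert_ident atLeastAtMost_iff le_Suc_eq subset_iff Suc_n_not_le_n)+
  have s1: "sum (?w (Suc (Suc m))) (adm (Suc m)) = f (Suc (Suc (Suc m))) * msum f g (Suc m)"
    unfolding msum_def sum_distrib_left
  proof (rule sum.cong[OF refl])
    fix S assume S: "S \<in> adm (Suc m)"
    have e: "{1..Suc (Suc (Suc m))} - (S \<union> Suc ` S) = insert (Suc (Suc (Suc m))) ({1..Suc (Suc m)} - (S \<union> Suc ` S))"
      using S unfolding adm_def by auto
    have n: "Suc (Suc (Suc m)) \<notin> {1..Suc (Suc m)} - (S \<union> Suc ` S)" by auto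
    show "?w (Suc (Suc m)) S = f (Suc (Suc (Suc m))) * ?w (Suc m) S"
      unfolding e by (subst prod.insert[OF _ n]) (auto simp: ac_simps)
  qed
  have s2: "sum (?w (Suc (Suc m))) (insert (Suc (Suc m)) ` adm m) = - g (Suc (Suc m)) * msum f g m"
    unfolding msum_def sum_distrib_left sum.reindex[OF inj] o_def
  proof (rule sum.cong[OF refl])
    fix S assume S: "S \<in> adm m"
    have fS: "finite S" using adm_fin[OF S] .
    have nS: "Suc (Suc m) \<notin> S" using S unfolding adm_def by auto
    have e: "{1..Suc (Suc (Suc m))} - (insert (Suc (Suc m)) S \<union> Suc ` insert (Suc (Suc m)) S)
       = {1..Suc m} - (S \<union> Suc ` S)"
      using S unfolding adm_def by auto
    show "?w (Suc (Suc m)) (insert (Suc (Suc m)) S) = - g (Suc (Suc m)) * ?w m S"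
      unfolding e using fS nS by simp
  qed
  show ?thesis
    apply (subst msum_def)
    apply (subst adm_SS)
    apply (subst sum.union_disjoint)
    using finite_adm disj s1 s2 by auto
qed

lemma msum0: "msum f g 0 = f 1"
  unfolding msum_def adm0 by simp

lemma msum1: "msum f g (Suc 0) = f 1 * f 2 - g 1"
proof -
  have e: "{1..Suc (Suc 0)} = {1, 2}" by auto
  have e2: "{Suc 0..Suc (Suc 0)} - {Suc (Suc 0), Suc 0} = {}" by auto
  show ?thesis unfolding msum_def adm1 by (simp add: e e2 numeral_2_eq_2)
qed

fun P :: "(nat \<Rightarrow> complex) \<Rightarrow> (nat \<Rightarrow> complex) \<Rightarrow> nat \<Rightarrow> complex" where
  "P f g 0 = 1"
| "P f g (Suc 0) = f 1"
| "P f g (Suc (Suc n)) = f (Suc (Suc n)) * P f g (Suc n) - g (Suc n) * P f g n"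

lemma msum_P: "msum f g m = P f g (Suc m)"
  by (induction m rule: induct2) (simp_all add: msum0 msum1 msum_SS numeral_2_eq_2)

lemma P_cong: "(\<forall>j\<in>{1..n}. f j = f' j) \<Longrightarrow> (\<forall>i\<in>{1..<n}. g i = g' i) \<Longrightarrow> P f g n = P f' g' n"
  by (induction n rule: induct2) auto

lemma msum_rev: "msum f g N = msum (\<lambda>j. f (Suc (Suc N) - j)) (\<lambda>i. g (Suc N - i)) N"
proof -
  define r where "r = (\<lambda>i::nat. Suc N - i)"
  define s where "s = (\<lambda>i::nat. Suc (Suc N) - i)"
  have rr: "S \<in> adm N \<Longrightarrow> r ` (r ` S) = S" for S
  proof -
    assume "S \<in> adm N"
    then have "\<forall>i\<in>S. r (r i) = i" unfolding adm_def r_def by auto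
    then show ?thesis by (simp add: image_image)
  qed
  have ra: "S \<in> adm N \<Longrightarrow> r ` S \<in> adm N" for S
  proof -
    assume S: "S \<in> adm N"
    have sub: "r ` S \<subseteq> {1..N}" using S unfolding adm_def r_def by (auto simp: subset_iff)
    have nc: "\<forall>x\<in>r ` S. Suc x \<notin> r ` S"
    proof (intro ballI notI)
      fix x assume x: "x \<in> r ` S" and y: "Suc x \<in> r ` S"
      obtain i where i: "i \<in> S" "x = r i" using x by blast
      obtain j where j: "j \<in> S" "Suc x = r j" using y by blast
      have "i \<le> N" "j \<le> N" "1 \<le> i" "1 \<le> j" using i j S unfolding adm_def by auto
      then have "i = Suc j" using i j unfolding r_def by simp
      then show False using i j S unfolding adm_def by auto
    qed
    show ?thesis using sub nc unfolding adm_def by blast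
  qed
  have sS: "s ` {1..Suc N} = {1..Suc N}"
  proof
    show "s ` {1..Suc N} \<subseteq> {1..Suc N}" unfolding s_def by auto
    show "{1..Suc N} \<subseteq> s ` {1..Suc N}"
    proof
      fix x assume x: "x \<in> {1..Suc N}"
      then have "x = s (s x)" "s x \<in> {1..Suc N}" unfolding s_def by auto
      then show "x \<in> s ` {1..Suc N}" by blast
    qed
  qed
  have sinj: "inj_on s {1..Suc N}" unfolding s_def inj_on_def by auto
  show ?thesis unfolding msum_def
  proof (rule sum.reindex_bij_witness[where i = "\<lambda>S. r ` S" and j = "\<lambda>S. r ` S"])
    fix S assume S: "S \<in> adm N"
    show "r ` (r ` S) = S" using rr[OF S] .
    show "r ` S \<in> adm N" using ra[OF S] .
    have Ssub: "S \<subseteq> {1..N}" using S unfolding adm_def by auto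
    have rinj: "inj_on r S" using Ssub unfolding r_def inj_on_def by (auto simp: subset_iff)
    have c: "card (r ` S) = card S" using card_image[OF rinj] .
    have pg: "(\<Prod>i\<in>r ` S. g (Suc N - i)) = (\<Prod>i\<in>S. g i)"
      using Ssub by (subst prod.reindex[OF rinj]) (auto simp: r_def intro!: prod.cong)
    have u: "r ` S \<union> Suc ` (r ` S) = s ` (S \<union> Suc ` S)"
    proof -
      have "s ` S = Suc ` (r ` S)" using Ssub unfolding r_def s_def image_image
        by (intro image_cong) (auto simp: subset_iff Suc_diff_le)
      moreover have "s ` (Suc ` S) = r ` S" unfolding r_def s_def image_image by simp
      ultimately show ?thesis by (simp add: image_Un Un_commute)
    qed
    have sub: "S \<union> Suc ` S \<subseteq> {1..Suc N}" using Ssub by auto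
    have cm: "{1..Suc N} - (r ` S \<union> Suc ` (r ` S)) = s ` ({1..Suc N} - (S \<union> Suc ` S))"
      unfolding u using inj_on_image_set_diff[OF sinj _ sub, of "{1..Suc N}"] sS by auto
    have sinj2: "inj_on s ({1..Suc N} - (S \<union> Suc ` S))" using sinj by (rule inj_on_subset) auto
    have pf: "(\<Prod>j\<in>{1..Suc N} - (r ` S \<union> Suc ` (r ` S)). f (Suc (Suc N) - j))
        = (\<Prod>j\<in>{1..Suc N} - (S \<union> Suc ` S). f j)"
      unfolding cm by (subst prod.reindex[OF sinj2]) (auto simp: s_def intro!: prod.cong)
    show "(- 1) ^ card (r ` S) * (\<Prod>i\<in>r ` S. g (Suc N - i)) *
          (\<Prod>j\<in>{1..Suc N} - (r ` S \<union> Suc ` r ` S). f (Suc (Suc N) - j)) =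
          (- 1) ^ card S * prod g S * (\<Prod>j\<in>{1..Suc N} - (S \<union> Suc ` S). f j)"
      using c pg pf by simp
  qed (use rr ra in auto)
qed

definition R :: "(nat \<Rightarrow> complex) \<Rightarrow> (nat \<Rightarrow> complex) \<Rightarrow> (nat \<Rightarrow> complex) \<Rightarrow> (nat \<Rightarrow> complex) \<Rightarrow> nat \<Rightarrow> bool" where
  "R a bb cc d n \<longleftrightarrow> d n * a n - d (n - 1) * bb n + (if n \<ge> 2 then d (n - 2) else 0) * cc n = 0"

lemma L1: "d 0 = 1 \<Longrightarrow> \<forall>k\<in>{1..n}. R a bb cc d k \<Longrightarrow> (\<Prod>k\<in>{1..n}. a k) * d n = P bb (\<lambda>i. a i * cc (Suc i)) n"
proof (induction n rule: induct2)
  case 1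
  then show ?case by simp
next
  case 2
  then show ?case by (auto simp: R_def mult.commute)
next
  case (3 j)
  have IH1: "(\<Prod>k\<in>{1..j}. a k) * d j = P bb (\<lambda>i. a i * cc (Suc i)) j" using 3 by auto
  have IH2: "(\<Prod>k\<in>{1..Suc j}. a k) * d (Suc j) = P bb (\<lambda>i. a i * cc (Suc i)) (Suc j)" using 3 by auto
  have r: "d (Suc (Suc j)) * a (Suc (Suc j)) = d (Suc j) * bb (Suc (Suc j)) - d j * cc (Suc (Suc j))"
  proof -
    have "R a bb cc d (Suc (Suc j))" using 3(4) by auto
    then show ?thesis by (simp add: R_def algebra_simps)
  qed
  have "(\<Prod>k\<in>{1..Suc (Suc j)}. a k) * d (Suc (Suc j)) = (\<Prod>k\<in>{1..Suc j}. a k) * (d (Suc (Suc j)) * a (Suc (Suc j)))"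
    by (simp add: ac_simps)
  also have "\<dots> = bb (Suc (Suc j)) * ((\<Prod>k\<in>{1..Suc j}. a k) * d (Suc j)) - a (Suc j) * cc (Suc (Suc j)) * ((\<Prod>k\<in>{1..j}. a k) * d j)"
    unfolding r by (simp add: algebra_simps)
  finally show ?case unfolding IH1 IH2 by simp
qed

fun dd :: "(nat \<Rightarrow> complex) \<Rightarrow> (nat \<Rightarrow> complex) \<Rightarrow> (nat \<Rightarrow> complex) \<Rightarrow> nat \<Rightarrow> complex" where
  "dd a bb cc 0 = 1"
| "dd a bb cc (Suc 0) = bb 1 / a 1"
| "dd a bb cc (Suc (Suc n)) = (dd a bb cc (Suc n) * bb (Suc (Suc n)) - dd a bb cc n * cc (Suc (Suc n))) / a (Suc (Suc n))"

lemma dd_R: "k \<ge> 1 \<Longrightarrow> a k \<noteq> 0 \<Longrightarrow> R a bb cc (dd a bb cc) k"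
proof (cases k)
  case (Suc k')
  assume "a k \<noteq> 0"
  then show ?thesis using Suc by (cases k') (auto simp: R_def)
qed simp

lemma gen:
  assumes nz: "\<forall>n\<in>{1..N}. a n \<noteq> 0" and z: "a (Suc N) = 0"
  shows "(\<exists>d. d 0 = 1 \<and> (\<forall>n\<in>{1..Suc N}. R a bb cc d n)) \<longleftrightarrow> P bb (\<lambda>i. a i * cc (Suc i)) (Suc N) = 0"
proof
  assume "\<exists>d. d 0 = 1 \<and> (\<forall>n\<in>{1..Suc N}. R a bb cc d n)"
  then obtain d where "d 0 = 1" "\<forall>n\<in>{1..Suc N}. R a bb cc d n" by blast
  from L1[OF this] show "P bb (\<lambda>i. a i * cc (Suc i)) (Suc N) = 0" using z by simp
next
  assume p0: "P bb (\<lambda>i. a i * cc (Suc i)) (Suc N) = 0"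
  let ?d = "dd a bb cc"
  have Rk: "\<forall>k\<in>{1..N}. R a bb cc ?d k" using nz dd_R by auto
  have "R a bb cc ?d (Suc N)"
  proof (cases N)
    case 0
    then show ?thesis using p0 z by (simp add: R_def)
  next
    case (Suc M)
    have A1: "(\<Prod>k\<in>{1..Suc M}. a k) * ?d (Suc M) = P bb (\<lambda>i. a i * cc (Suc i)) (Suc M)"
      using L1[of ?d M] Rk Suc by (intro L1) auto
    have A2: "(\<Prod>k\<in>{1..M}. a k) * ?d M = P bb (\<lambda>i. a i * cc (Suc i)) M"
      using Rk Suc by (intro L1) auto
    have nzp: "(\<Prod>k\<in>{1..Suc M}. a k) \<noteq> 0" using nz Suc by auto
    have "(\<Prod>k\<in>{1..Suc M}. a k) * (- ?d (Suc M) * bb (Suc (Suc M)) + ?d M * cc (Suc (Suc M)))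
       = - (bb (Suc (Suc M)) * ((\<Prod>k\<in>{1..Suc M}. a k) * ?d (Suc M)) - a (Suc M) * cc (Suc (Suc M)) * ((\<Prod>k\<in>{1..M}. a k) * ?d M))"
      by (simp add: algebra_simps)
    also have "\<dots> = 0" unfolding A1 A2 using p0 Suc by simp
    finally have "- ?d (Suc M) * bb (Suc (Suc M)) + ?d M * cc (Suc (Suc M)) = 0" using nzp by simp
    then show ?thesis using z Suc by (simp add: R_def)
  qed
  then show "\<exists>d. d 0 = 1 \<and> (\<forall>n\<in>{1..Suc N}. R a bb cc d n)" using Rk
    by (intro exI[of _ ?d]) (auto simp: le_Suc_eq)
qed


lemma qp_ne1: "Re L < 0 \<Longrightarrow> r \<noteq> 0 \<Longrightarrow> qp L (of_real r) \<noteq> 1"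
proof
  assume L: "Re L < 0" and r: "r \<noteq> 0" and e: "qp L (of_real r) = 1"
  have "norm (exp (of_real r * L)) = 1" using e unfolding qp_def by simp
  then have "exp (Re (of_real r * L)) = 1" by simp
  then have "r * Re L = 0" by simp
  then show False using L r by simp
qed

lemma qp_nz: "qp L x \<noteq> 0" unfolding qp_def by simp

theorem proposition3p8:
  fixes q L t1 t2 h1 h2 l1 l2 a1 a2 b E :: complex and N :: nat
  assumes "0 < cmod q" and "cmod q < 1" and "exp L = q"
    and "t1 \<noteq> 0" and "t2 \<noteq> 0"
    and "b = of_nat N + 1"
  shows "apparent L t1 t2 h1 h2 l1 l2 a1 a2 b E N \<longleftrightarrow>
         cpoly L t1 t2 h1 h2 l1 l2 a1 a2 b N E = 0"
proof -
  note bdef = assms(6)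
  have ReL: "Re L < 0" using assms(2,3) by auto
  define lam where "lam = lambda1 h1 h2 l1 l2 a1 a2 b"
  define A where "A = (\<lambda>n::nat. t1 * t2 * qp L (1 - of_nat n + h1 + h2 - lam) * (1 - qp L (of_nat n)) * (1 - qp L (of_nat n - b)))"
  define B where "B = (\<lambda>n::nat. E + qp L (3/2 - of_nat n - lam) * (qp L h1 * t1 + qp L h2 * t2)
                     + qp L (of_nat n - 3/2 + lam + a1 + a2) * (qp L l1 * t1 + qp L l2 * t2))"
  define C where "C = (\<lambda>n::nat. qp L (2 - of_nat n - lam) * (1 - qp L (of_nat n - 2 + lam + a1)) * (1 - qp L (of_nat n - 2 + lam + a2)))"
  have hrel: "heun_rel L t1 t2 h1 h2 l1 l2 a1 a2 b E d n \<longleftrightarrow> R A B C d n" for d n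
    unfolding heun_rel_def R_def A_def B_def C_def Let_def lam_def by (simp add: mult.assoc)
  have app: "apparent L t1 t2 h1 h2 l1 l2 a1 a2 b E N \<longleftrightarrow> (\<exists>d. d 0 = 1 \<and> (\<forall>n\<in>{1..Suc N}. R A B C d n))"
    unfolding apparent_def hrel by simp
  have nz: "\<forall>n\<in>{1..N}. A n \<noteq> 0"
  proof
    fix n assume n: "n \<in> {1..N}"
    have "qp L (of_real (real n)) \<noteq> 1" using qp_ne1[OF ReL, of "real n"] n by simp
    then have 1: "1 - qp L (of_nat n) \<noteq> 0" by simp
    have "qp L (of_real (real n - real N - 1)) \<noteq> 1" using qp_ne1[OF ReL, of "real n - real N - 1"] n by simp
    then have 2: "1 - qp L (of_nat n - b) \<noteq> 0" using bdef by (simp add: algebra_simps)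
    show "A n \<noteq> 0" unfolding A_def using 1 2 assms(4,5) qp_nz by simp
  qed
  have z: "A (Suc N) = 0" unfolding A_def using bdef by (simp add: qp_def)
  have cp: "cpoly L t1 t2 h1 h2 l1 l2 a1 a2 b N E
      = msum (\<lambda>j. E + cy L t1 t2 h1 h2 l1 l2 a1 a2 b N j) (\<lambda>i. cx L t1 t2 h1 h2 l1 l2 a1 a2 b N i * cz L h1 h2 l1 l2 a1 a2 b N (Suc i)) N"
    unfolding cpoly_def msum_def adm_def by simp
  have eB: "E + cy L t1 t2 h1 h2 l1 l2 a1 a2 b N (Suc (Suc N) - j) = B j" if j: "j \<in> {1..Suc N}" for j
  proof -
    have mj: "of_nat (Suc (Suc N) - j) = of_nat N + 2 - (of_nat j :: complex)" using j by (simp add: of_nat_diff)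
    have e1: "(of_nat N :: complex) - (of_nat N + 2 - of_nat j) + 1 / 2 + lam + a1 + a2 = of_nat j - 3/2 + lam + a1 + a2"
      by (simp add: field_simps)
    have e2: "(of_nat N + 2 - of_nat j) - (of_nat N :: complex) - 1 / 2 - lam = 3/2 - of_nat j - lam"
      by (simp add: field_simps)
    show ?thesis unfolding cy_def Let_def B_def mj lam_def[symmetric] e1 e2 by (simp add: ac_simps)
  qed
  have eG: "cx L t1 t2 h1 h2 l1 l2 a1 a2 b N (Suc N - i) * cz L h1 h2 l1 l2 a1 a2 b N (Suc (Suc N - i)) = A i * C (Suc i)"
    if i: "i \<in> {1..<Suc N}" for i
  proof -
    define ci where "ci = (of_nat i :: complex)"
    have mi: "of_nat (Suc N - i) = of_nat N + 1 - ci" using i by (simp add: of_nat_diff ci_def)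
    have mi2: "of_nat (Suc (Suc N - i)) = of_nat N + 2 - ci" using i by (simp add: of_nat_diff ci_def)
    have cxe: "cx L t1 t2 h1 h2 l1 l2 a1 a2 b N (Suc N - i) = t1*t2*qp L (2 - ci + h1 + h2 - a1 - 2*lam) * (1 - qp L (ci - b)) * (1 - qp L (ci - 1 + lam + a1))"
    proof -
      have x1: "of_nat N + 1 - ci - of_nat N + 1 + h1 + h2 - a1 - 2 * lam = 2 - ci + h1 + h2 - a1 - 2*lam" by simp
      have x2: "- (of_nat N + 1 - ci) = ci - b" using bdef by simp
      have x3: "of_nat N - (of_nat N + 1 - ci) + lam + a1 = ci - 1 + lam + a1" by simp
      show ?thesis unfolding cx_def Let_def mi lam_def[symmetric] x1 x2 x3 ..
    qed
    have cze: "cz L h1 h2 l1 l2 a1 a2 b N (Suc (Suc N - i)) = qp L (a1 - ci) * (1 - qp L (ci - 1 + lam + a2)) * (1 - qp L ci)"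
    proof -
      have x1: "of_nat N + 2 - ci - of_nat N - 2 + a1 = a1 - ci" by simp
      have x2: "of_nat N - (of_nat N + 2 - ci) + 1 + lam + a2 = ci - 1 + lam + a2" by simp
      have x3: "of_nat N - (of_nat N + 2 - ci) + 2 = ci" by simp
      show ?thesis unfolding cz_def Let_def mi2 lam_def[symmetric] x1 x2 x3 ..
    qed
    have Ce: "C (Suc i) = qp L (1 - ci - lam) * (1 - qp L (ci - 1 + lam + a1)) * (1 - qp L (ci - 1 + lam + a2))"
      unfolding C_def ci_def by (simp add: algebra_simps)
    have Ae: "A i = t1*t2*qp L (1 - ci + h1 + h2 - lam) * (1 - qp L ci) * (1 - qp L (ci - b))"
      unfolding A_def ci_def ..
    have qpe: "qp L (2 - ci + h1 + h2 - a1 - 2*lam) * qp L (a1 - ci) = qp L (1 - ci + h1 + h2 - lam) * qp L (1 - ci - lam)"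
      unfolding qp_def exp_add[symmetric] by (rule arg_cong[where f = exp]) (simp add: algebra_simps)
    have "cx L t1 t2 h1 h2 l1 l2 a1 a2 b N (Suc N - i) * cz L h1 h2 l1 l2 a1 a2 b N (Suc (Suc N - i))
      = t1*t2*(qp L (2 - ci + h1 + h2 - a1 - 2*lam) * qp L (a1 - ci)) * ((1 - qp L (ci - b)) * (1 - qp L (ci - 1 + lam + a1)) * (1 - qp L (ci - 1 + lam + a2)) * (1 - qp L ci))"
      unfolding cxe cze by (simp only: ac_simps)
    also have "\<dots> = t1*t2*(qp L (1 - ci + h1 + h2 - lam) * qp L (1 - ci - lam)) * ((1 - qp L (ci - b)) * (1 - qp L (ci - 1 + lam + a1)) * (1 - qp L (ci - 1 + lam + a2)) * (1 - qp L ci))"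
      unfolding qpe ..
    also have "\<dots> = A i * C (Suc i)"
      unfolding Ae Ce by (simp only: ac_simps)
    finally show ?thesis .
  qed
  have "cpoly L t1 t2 h1 h2 l1 l2 a1 a2 b N E = P B (\<lambda>i. A i * C (Suc i)) (Suc N)"
    unfolding cp apply (subst msum_rev) unfolding msum_P
    by (rule P_cong) (use eB eG in auto)
  then show ?thesis unfolding app gen[OF nz z] by simp
qed

end
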